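(* Let $\mathfrak{H}$ be a Hilbert space and let $C$ be a quasi-sectorial contraction on $\mathfrak{H}$ with numerical range $W(C)\subseteq D_\alpha$ for some $0\le\alpha<\pi/2$. Let $K>0$ be a constant such that $\|C^n(\mathbb{1}-C)\|\le \frac{K}{n+1}$ for all $n\in\mathbb{N}$. Then \[ \left\|C^n-e^{n(C-\mathbb{1})}\right\|\le \frac{M}{n^{1/3}}, \qquad n=1,2,3,\dots, \] where $M=2K+2$.
   Context: $\mathbb{1}$ is the identity operator. The numerical range of a bounded operator $C$ is $W(C)=\{\langle Cu,u\rangle: u\in\mathfrak{H},\ \|u\|=1\}$. For $\alpha\in[0,\pi/2)$, $D_\alpha:=\{z\in\mathbb{C}:|z|\le\sin\alpha\}\cup\{z\in\mathbb{C}: |\arg(1-z)|\le\alpha \text{ and } |z-1|\le\cos\alpha\}$. A contraction $C$ (bounded, $\|C\|\le1$) on $\mathfrak{H}$ is called quasi-sectorial with semi-angle $\alpha$ (vertex at $z=1$) if $W(C)\subseteq D_\alpha$. (For such $C$ a constant $K$ with $\|C^n(\mathbb{1}-C)\|\le K/(n+1)$ for all $n$ is known to exist.) *)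

theory Defs
  imports "HOL-Analysis.Analysis"
begin

text \<open>Complex Hilbert spaces: a (real) Banach space carrying a complex scalar
multiplication and a complex inner product (linear in the first argument,
conjugate-linear in the second) that induces the norm.\<close>

class complex_hilbert = banach +
  fixes scaleC :: "complex \<Rightarrow> 'a \<Rightarrow> 'a"
    and cinner :: "'a \<Rightarrow> 'a \<Rightarrow> complex"
  assumes scaleC_of_real: "scaleC (complex_of_real r) x = scaleR r x"
    and scaleC_add_right: "scaleC c (x + y) = scaleC c x + scaleC c y"
    and scaleC_add_left: "scaleC (b + c) x = scaleC b x + scaleC c x"
    and scaleC_scaleC: "scaleC b (scaleC c x) = scaleC (b * c) x"
    and cinner_commute: "cinner x y = cnj (cinner y x)"
    and cinner_add_left: "cinner (x + y) z = cinner x z + cinner y z"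
    and cinner_scaleC_left: "cinner (scaleC c x) y = c * cinner x y"
    and cinner_ge_zero: "0 \<le> Re (cinner x x)"
    and cinner_eq_zero_iff: "cinner x x = 0 \<longleftrightarrow> x = 0"
    and norm_eq_sqrt_cinner: "norm x = sqrt (Re (cinner x x))"

text \<open>Bounded operators are elements of \<open>'a \<Rightarrow>L 'a\<close> (operator norm = \<open>norm\<close>)
that are in addition complex-linear.\<close>

definition complex_linear_op :: "('a::complex_hilbert \<Rightarrow>\<^sub>L 'a) \<Rightarrow> bool" where
  "complex_linear_op C \<longleftrightarrow> (\<forall>c x. blinfun_apply C (scaleC c x) = scaleC c (blinfun_apply C x))"

primrec op_pow :: "('a::real_normed_vector \<Rightarrow>\<^sub>L 'a) \<Rightarrow> nat \<Rightarrow> ('a \<Rightarrow>\<^sub>L 'a)" where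
  "op_pow A 0 = id_blinfun"
| "op_pow A (Suc n) = A o\<^sub>L op_pow A n"

definition op_exp :: "('a::banach \<Rightarrow>\<^sub>L 'a) \<Rightarrow> ('a \<Rightarrow>\<^sub>L 'a)" where
  "op_exp A = (\<Sum>k. (1 / fact k) *\<^sub>R op_pow A k)"

definition numerical_range :: "('a::complex_hilbert \<Rightarrow>\<^sub>L 'a) \<Rightarrow> complex set" where
  "numerical_range C = {cinner (blinfun_apply C u) u | u. norm u = 1}"

definition D_alpha :: "real \<Rightarrow> complex set" where
  "D_alpha \<alpha> = {z. cmod z \<le> sin \<alpha>} \<union> {z. \<bar>Arg (1 - z)\<bar> \<le> \<alpha> \<and> cmod (z - 1) \<le> cos \<alpha>}"

definition quasi_sectorial_contraction :: "real \<Rightarrow> ('a::complex_hilbert \<Rightarrow>\<^sub>L 'a) \<Rightarrow> bool" where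
  "quasi_sectorial_contraction \<alpha> C \<longleftrightarrow>
     complex_linear_op C \<and> norm C \<le> 1 \<and> numerical_range C \<subseteq> D_alpha \<alpha>"

end

theory Submission imports Defs begin


lemma cassoc: "(a o\<^sub>L b) o\<^sub>L c = a o\<^sub>L (b o\<^sub>L (c::'a::real_normed_vector \<Rightarrow>\<^sub>L 'a))"
  by (rule blinfun_eqI) simp

lemma cid1[simp]: "id_blinfun o\<^sub>L a = a" "a o\<^sub>L id_blinfun = a"
  by (auto intro: blinfun_eqI)

lemma op_pow_Suc': "op_pow A (Suc n) = op_pow A n o\<^sub>L A"
proof (induction n)
  case (Suc n)
  have "op_pow A (Suc (Suc n)) = A o\<^sub>L (op_pow A n o\<^sub>L A)" using Suc by simp
  also have "\<dots> = op_pow A (Suc n) o\<^sub>L A" by (simp add: cassoc[symmetric])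
  finally show ?case .
qed simp

lemma op_pow_norm: "norm (op_pow A n) \<le> norm A ^ n"
proof (induction n)
  case 0 thus ?case by (simp add: norm_blinfun_id_le)
next
  case (Suc n)
  have "norm (op_pow A (Suc n)) \<le> norm A * norm (op_pow A n)"
    by (simp add: norm_blinfun_compose)
  also have "\<dots> \<le> norm A * norm A ^ n" by (rule mult_left_mono[OF Suc]) simp
  finally show ?case by simp
qed

lemma op_pow_scaleR: "op_pow (c *\<^sub>R A) n = c ^ n *\<^sub>R op_pow A n"
  by (induction n) (auto intro!: blinfun_eqI simp: blinfun.bilinear_simps)

lemma compose_sum_right: "A o\<^sub>L (\<Sum>i\<in>S. f i) = (\<Sum>i\<in>S. A o\<^sub>L f i)"
  by (rule bounded_bilinear.sum_right[OF bounded_bilinear_blinfun_compose])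

lemma compose_sum_left: "(\<Sum>i\<in>S. f i) o\<^sub>L A = (\<Sum>i\<in>S. f i o\<^sub>L A)"
  by (rule bounded_bilinear.sum_left[OF bounded_bilinear_blinfun_compose])

lemma cscale[simp]: "A o\<^sub>L (c *\<^sub>R B) = c *\<^sub>R (A o\<^sub>L B)" "(c *\<^sub>R A) o\<^sub>L B = c *\<^sub>R (A o\<^sub>L B)"
  by (auto intro!: blinfun_eqI simp: blinfun.bilinear_simps)

lemma cadd: "(A + B) o\<^sub>L X = (A o\<^sub>L X) + (B o\<^sub>L X)" "X o\<^sub>L (A + B) = (X o\<^sub>L A) + (X o\<^sub>L B)"
  "(A - B) o\<^sub>L X = (A o\<^sub>L X) - (B o\<^sub>L X)" "X o\<^sub>L (A - B) = (X o\<^sub>L A) - (X o\<^sub>L B)"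
  by (auto intro!: blinfun_eqI simp: blinfun.bilinear_simps)



definition T :: "('a::real_normed_vector \<Rightarrow>\<^sub>L 'a) \<Rightarrow> nat \<Rightarrow> ('a \<Rightarrow>\<^sub>L 'a)" where
  "T A n = (1 / fact n) *\<^sub>R op_pow A n"

lemma times_T: "B o\<^sub>L T B n = real (Suc n) *\<^sub>R T B (Suc n)"
  proof -
  have "real (Suc n) * (1 / fact (Suc n)) = 1 / fact n"
    by (simp add: fact_Suc del: of_nat_Suc)
  thus ?thesis by (simp add: T_def scaleR_scaleR del: of_nat_Suc)
qed

lemma exp_series_shift:
  fixes A :: "'a::real_normed_vector \<Rightarrow>\<^sub>L 'a" and c :: real
  defines "s \<equiv> \<lambda>j. c ^ j / fact j"
  shows "T (A + c *\<^sub>R id_blinfun) n = (\<Sum>i\<le>n. s (n - i) *\<^sub>R T A i)"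
proof (induction n)
  case 0
  show ?case by (simp add: T_def s_def)
next
  case (Suc n)
  let ?B = "A + c *\<^sub>R id_blinfun"
  have cs: "c * s (n - i) = real (Suc n - i) * s (Suc n - i)" if "i \<le> n" for i
    using that by (simp add: s_def Suc_diff_le divide_simps)
  have "real (Suc n) *\<^sub>R T ?B (Suc n) = ?B o\<^sub>L (\<Sum>i\<le>n. s (n - i) *\<^sub>R T A i)"
    by (metis Suc.IH times_T)
  also have "\<dots> = (\<Sum>i\<le>n. s (n - i) *\<^sub>R (A o\<^sub>L T A i)) + (\<Sum>i\<le>n. (c * s (n - i)) *\<^sub>R T A i)"
    by (simp add: compose_sum_right cadd scaleR_add_right sum.distrib mult.commute)
  also have "\<dots> = (\<Sum>i\<le>n. real (Suc i) *\<^sub>R (s (n - i) *\<^sub>R T A (Suc i)))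
                + (\<Sum>i\<le>n. real (Suc n - i) *\<^sub>R (s (Suc n - i) *\<^sub>R T A i))"
    by (simp add: times_T cs mult.commute)
  also have "(\<Sum>i\<le>n. real (Suc i) *\<^sub>R (s (n - i) *\<^sub>R T A (Suc i)))
           = (\<Sum>i\<le>Suc n. real i *\<^sub>R (s (Suc n - i) *\<^sub>R T A i))"
    by (subst sum.atMost_Suc_shift) simp
  also have "(\<Sum>i\<le>n. real (Suc n - i) *\<^sub>R (s (Suc n - i) *\<^sub>R T A i))
           = (\<Sum>i\<le>Suc n. real (Suc n - i) *\<^sub>R (s (Suc n - i) *\<^sub>R T A i))"
    by simp
  also have "(\<Sum>i\<le>Suc n. real i *\<^sub>R (s (Suc n - i) *\<^sub>R T A i))
           + (\<Sum>i\<le>Suc n. real (Suc n - i) *\<^sub>R (s (Suc n - i) *\<^sub>R T A i))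
           = (\<Sum>i\<le>Suc n. real (Suc n) *\<^sub>R (s (Suc n - i) *\<^sub>R T A i))"
    unfolding sum.distrib[symmetric]
  proof (intro sum.cong refl)
    fix i assume "i \<in> {..Suc n}"
    hence "real i + real (Suc n - i) = real (Suc n)" by (simp add: of_nat_diff)
    thus "real i *\<^sub>R (s (Suc n - i) *\<^sub>R T A i) + real (Suc n - i) *\<^sub>R (s (Suc n - i) *\<^sub>R T A i)
       = real (Suc n) *\<^sub>R (s (Suc n - i) *\<^sub>R T A i)" by (metis scaleR_add_left)
  qed
  also have "\<dots> = real (Suc n) *\<^sub>R (\<Sum>i\<le>Suc n. s (Suc n - i) *\<^sub>R T A i)"
    by (simp only: scaleR_right.sum)
  finally show ?case
    by (simp del: sum.cl_ivl_Suc of_nat_Suc)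
qed



lemma Cauchy_scaleR_sums:
  fixes a :: "nat \<Rightarrow> 'a::banach" and b :: "nat \<Rightarrow> real"
  assumes a: "summable (\<lambda>k. norm (a k))"
    and b: "summable (\<lambda>k. norm (b k))"
  shows "(\<lambda>k. \<Sum>i\<le>k. b (k - i) *\<^sub>R a i) sums ((\<Sum>k. b k) *\<^sub>R (\<Sum>k. a k))"
proof -
  let ?S1 = "\<lambda>n::nat. {..<n} \<times> {..<n}"
  let ?S2 = "\<lambda>n::nat. {(i,j). i + j < n}"
  have S1_mono: "\<And>m n. m \<le> n \<Longrightarrow> ?S1 m \<subseteq> ?S1 n" by auto
  have S2_le_S1: "\<And>n. ?S2 n \<subseteq> ?S1 n" by auto
  have S1_le_S2: "\<And>n. ?S1 (n div 2) \<subseteq> ?S2 n" by auto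
  have finite_S1: "\<And>n. finite (?S1 n)" by simp
  with S2_le_S1 have finite_S2: "\<And>n. finite (?S2 n)" by (rule finite_subset)

  let ?g = "\<lambda>(i,j). b j *\<^sub>R a i"
  let ?f = "\<lambda>(i,j). norm (a i) * norm (b j)"
  have f_nonneg: "\<And>x. 0 \<le> ?f x" by auto
  then have norm_sum_f: "\<And>A. norm (sum ?f A) = sum ?f A"
    unfolding real_norm_def
    by (simp only: abs_of_nonneg sum_nonneg [rule_format])
  have gprod: "sum ?g (?S1 n) = (\<Sum>k<n. b k) *\<^sub>R (\<Sum>k<n. a k)" for n
  proof -
    have "sum ?g (?S1 n) = (\<Sum>i<n. \<Sum>j<n. b j *\<^sub>R a i)"
      by (rule sum.cartesian_product[symmetric])
    also have "\<dots> = (\<Sum>i<n. (\<Sum>j<n. b j) *\<^sub>R a i)"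
      by (simp only: scaleR_sum_left)
    also have "\<dots> = (\<Sum>k<n. b k) *\<^sub>R (\<Sum>k<n. a k)"
      by (simp only: scaleR_sum_right)
    finally show ?thesis .
  qed
  have "(\<lambda>n. (\<Sum>k<n. b k) *\<^sub>R (\<Sum>k<n. a k)) \<longlonglongrightarrow> (\<Sum>k. b k) *\<^sub>R (\<Sum>k. a k)"
    by (intro tendsto_scaleR summable_LIMSEQ summable_norm_cancel [OF a] summable_norm_cancel [OF b])
  then have 1: "(\<lambda>n. sum ?g (?S1 n)) \<longlonglongrightarrow> (\<Sum>k. b k) *\<^sub>R (\<Sum>k. a k)"
    by (simp only: gprod)

  have "(\<lambda>n. (\<Sum>k<n. norm (a k)) * (\<Sum>k<n. norm (b k))) \<longlonglongrightarrow> (\<Sum>k. norm (a k)) * (\<Sum>k. norm (b k))"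
    using a b by (intro tendsto_mult summable_LIMSEQ)
  then have "(\<lambda>n. sum ?f (?S1 n)) \<longlonglongrightarrow> (\<Sum>k. norm (a k)) * (\<Sum>k. norm (b k))"
    by (simp only: sum_product sum.Sigma [rule_format] finite_lessThan)
  then have "convergent (\<lambda>n. sum ?f (?S1 n))"
    by (rule convergentI)
  then have Cauchy: "Cauchy (\<lambda>n. sum ?f (?S1 n))"
    by (rule convergent_Cauchy)
  have "Zfun (\<lambda>n. sum ?f (?S1 n - ?S2 n)) sequentially"
  proof (rule ZfunI, simp only: eventually_sequentially norm_sum_f)
    fix r :: real
    assume r: "0 < r"
    from CauchyD [OF Cauchy r] obtain N
      where "\<forall>m\<ge>N. \<forall>n\<ge>N. norm (sum ?f (?S1 m) - sum ?f (?S1 n)) < r" ..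
    then have "\<And>m n. N \<le> n \<Longrightarrow> n \<le> m \<Longrightarrow> norm (sum ?f (?S1 m - ?S1 n)) < r"
      by (simp only: sum_diff finite_S1 S1_mono)
    then have N: "\<And>m n. N \<le> n \<Longrightarrow> n \<le> m \<Longrightarrow> sum ?f (?S1 m - ?S1 n) < r"
      by (simp only: norm_sum_f)
    show "\<exists>N. \<forall>n\<ge>N. sum ?f (?S1 n - ?S2 n) < r"
    proof (intro exI allI impI)
      fix n
      assume "2 * N \<le> n"
      then have n: "N \<le> n div 2" by simp
      have "sum ?f (?S1 n - ?S2 n) \<le> sum ?f (?S1 n - ?S1 (n div 2))"
        by (intro sum_mono2 finite_Diff finite_S1 f_nonneg Diff_mono subset_refl S1_le_S2)
      also have "\<dots> < r"
        using n div_le_dividend by (rule N)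
      finally show "sum ?f (?S1 n - ?S2 n) < r" .
    qed
  qed
  then have "Zfun (\<lambda>n. sum ?g (?S1 n - ?S2 n)) sequentially"
    apply (rule Zfun_le [rule_format])
    apply (simp only: norm_sum_f)
    apply (rule order_trans [OF norm_sum sum_mono])
    apply (auto simp add: mult.commute)
    done
  then have 2: "(\<lambda>n. sum ?g (?S1 n) - sum ?g (?S2 n)) \<longlonglongrightarrow> 0"
    unfolding tendsto_Zfun_iff diff_0_right
    by (simp only: sum_diff finite_S1 S2_le_S1)
  with 1 have "(\<lambda>n. sum ?g (?S2 n)) \<longlonglongrightarrow> (\<Sum>k. b k) *\<^sub>R (\<Sum>k. a k)"
    by (rule Lim_transform2)
  then show ?thesis
    by (simp only: sums_def sum.triangle_reindex)
qed



lemma summable_norm_T: "summable (\<lambda>i. norm (T (A::'a::banach \<Rightarrow>\<^sub>L 'a) i))"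
proof (rule summable_comparison_test[OF _ summable_exp_generic[of "norm A"]])
  show "\<exists>N. \<forall>n\<ge>N. norm (norm (T A n)) \<le> norm A ^ n /\<^sub>R fact n"
    using op_pow_norm[of A] by (auto simp: T_def divide_simps)
qed

lemma op_exp_T: "op_exp A = (\<Sum>i. T A i)"
  by (simp add: op_exp_def T_def)

lemma op_exp_shift:
  fixes A :: "'a::banach \<Rightarrow>\<^sub>L 'a" and c :: real
  shows "op_exp (A + c *\<^sub>R id_blinfun) = exp c *\<^sub>R op_exp A"
proof -
  have b: "summable (\<lambda>k. norm (c ^ k / fact k))"
    using summable_exp_generic[of "\<bar>c\<bar>"] by (simp add: abs_mult power_abs divide_inverse mult.commute)
  have e: "(\<Sum>k. c ^ k / fact k) = exp c"
    using exp_converges[of c] by (simp add: sums_iff divide_inverse mult.commute)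
  have "(\<lambda>k. \<Sum>i\<le>k. (c ^ (k - i) / fact (k - i)) *\<^sub>R T A i) sums ((\<Sum>k. c ^ k / fact k) *\<^sub>R (\<Sum>k. T A k))"
    by (rule Cauchy_scaleR_sums[OF summable_norm_T b])
  note cp = this
  have "T (A + c *\<^sub>R id_blinfun) sums (exp c *\<^sub>R op_exp A)"
  proof -
    have "T (A + c *\<^sub>R id_blinfun) = (\<lambda>k. \<Sum>i\<le>k. (c ^ (k - i) / fact (k - i)) *\<^sub>R T A i)"
      by (rule ext, rule exp_series_shift)
    thus ?thesis using cp by (simp add: e op_exp_T)
  qed
  thus ?thesis by (simp add: op_exp_T sums_iff)
qed

lemma op_exp_poisson:
  fixes C :: "'a::banach \<Rightarrow>\<^sub>L 'a" and N :: real
  shows "(\<lambda>k. (exp (-N) * (N ^ k / fact k)) *\<^sub>R op_pow C k) sums op_exp (N *\<^sub>R (C - id_blinfun))"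
proof -
  have eq: "N *\<^sub>R (C - id_blinfun) = N *\<^sub>R C + (-N) *\<^sub>R id_blinfun"
    by (simp add: scaleR_diff_right)
  have "T (N *\<^sub>R C) sums op_exp (N *\<^sub>R C)"
    unfolding op_exp_T by (rule summable_sums[OF summable_norm_cancel[OF summable_norm_T]])
  hence "(\<lambda>k. exp (-N) *\<^sub>R T (N *\<^sub>R C) k) sums (exp (-N) *\<^sub>R op_exp (N *\<^sub>R C))"
    by (rule sums_scaleR_right)
  moreover have "exp (-N) *\<^sub>R T (N *\<^sub>R C) k = (exp (-N) * (N ^ k / fact k)) *\<^sub>R op_pow C k" for k
    by (simp add: T_def op_pow_scaleR)
  ultimately show ?thesis unfolding eq op_exp_shift by simp
qed



lemma mom0: "(\<lambda>k. N ^ k / fact k) sums exp (N::real)"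
  using exp_converges[of N] by (simp add: divide_inverse mult.commute)

lemma fact_Suc_div: "real (Suc k) * (N ^ Suc k / fact (Suc k)) = N * (N ^ k / fact k)"
  by (simp add: fact_Suc divide_simps del: of_nat_Suc)

lemma mom1: "(\<lambda>k. real k * (N ^ k / fact k)) sums (N * exp (N::real))"
proof -
  have "(\<lambda>k. N * (N ^ k / fact k)) sums (N * exp N)"
    by (rule sums_mult[OF mom0])
  hence "(\<lambda>k. real (Suc k) * (N ^ Suc k / fact (Suc k))) sums (N * exp N)"
    by (simp only: fact_Suc_div)
  thus ?thesis by (subst (asm) sums_Suc_iff) simp
qed

lemma mom2: "(\<lambda>k. (real k)^2 * (N ^ k / fact k)) sums ((N^2 + N) * exp (N::real))"
proof -
  have "(\<lambda>k. N * (real k * (N ^ k / fact k) + N ^ k / fact k)) sums (N * (N * exp N + exp N))"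
    by (rule sums_mult[OF sums_add[OF mom1 mom0]])
  moreover have "real (Suc k) ^ 2 * (N ^ Suc k / fact (Suc k)) = N * (real k * (N ^ k / fact k) + N ^ k / fact k)" for k
  proof -
    have "real (Suc k) ^ 2 * (N ^ Suc k / fact (Suc k)) = real (Suc k) * (real (Suc k) * (N ^ Suc k / fact (Suc k)))"
      by (simp add: power2_eq_square del: of_nat_Suc)
    also have "\<dots> = real (Suc k) * (N * (N ^ k / fact k))" by (simp only: fact_Suc_div)
    finally show ?thesis by (simp add: algebra_simps add_divide_distrib)
  qed
  ultimately have "(\<lambda>k. real (Suc k) ^ 2 * (N ^ Suc k / fact (Suc k))) sums (N * (N * exp N + exp N))"
    by simp
  hence "(\<lambda>k. (real k)^2 * (N ^ k / fact k)) sums (N * (N * exp N + exp N) + 0)"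
    by (subst (asm) sums_Suc_iff) simp
  thus ?thesis by (simp add: algebra_simps power2_eq_square)
qed

lemma poisson_var:
  fixes N :: real
  defines "p \<equiv> \<lambda>k. exp (-N) * (N ^ k / fact k)"
  shows "p sums 1" and "(\<lambda>k. p k * (real k - N)^2) sums N"
proof -
  have ee: "exp (-N) * exp N = 1" by (simp add: exp_minus_inverse mult.commute)
  show "p sums 1" unfolding p_def using sums_mult[OF mom0, of "exp (-N)" N] ee by simp
  have "(\<lambda>k. exp (-N) * ((real k)^2 * (N ^ k / fact k)) - (2*N*exp (-N)) * (real k * (N ^ k / fact k))
         + (N^2 * exp (-N)) * (N ^ k / fact k))
      sums (exp (-N) * ((N^2 + N) * exp N) - (2*N*exp (-N)) * (N * exp N) + (N^2 * exp (-N)) * exp N)"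
    by (intro sums_add sums_diff sums_mult mom0 mom1 mom2)
  moreover have "exp (-N) * ((N^2 + N) * exp N) - (2*N*exp (-N)) * (N * exp N) + (N^2 * exp (-N)) * exp N = N"
    using ee by (simp add: algebra_simps power2_eq_square)
  moreover have "(\<lambda>k. p k * (real k - N)^2) = (\<lambda>k. exp (-N) * ((real k)^2 * (N ^ k / fact k)) - (2*N*exp (-N)) * (real k * (N ^ k / fact k))
         + (N^2 * exp (-N)) * (N ^ k / fact k))"
    by (rule ext) (simp add: p_def field_simps power2_eq_square)
  ultimately show "(\<lambda>k. p k * (real k - N)^2) sums N" by simp
qed



lemma pow_le1: "norm C \<le> 1 \<Longrightarrow> norm (op_pow C j) \<le> 1"
  using op_pow_norm[of C j] by (meson norm_ge_zero order_trans power_le_one)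

lemma pow_diff_bound:
  fixes C :: "'a::real_normed_vector \<Rightarrow>\<^sub>L 'a"
  assumes h: "\<forall>n::nat. norm (op_pow C n o\<^sub>L (id_blinfun - C)) \<le> K / (real n + 1)"
    and K: "K > 0" and km: "k \<le> m"
  shows "norm (op_pow C k - op_pow C m) \<le> K * (real m - real k) / (real k + 1)"
  using km
proof (induction m rule: dec_induct)
  case base thus ?case by simp
next
  case (step m)
  have eq: "op_pow C m - op_pow C (Suc m) = op_pow C m o\<^sub>L (id_blinfun - C)"
    by (simp only: op_pow_Suc' cadd(4) cid1)
  have "norm (op_pow C k - op_pow C (Suc m)) \<le> norm (op_pow C k - op_pow C m) + norm (op_pow C m - op_pow C (Suc m))"
    using norm_triangle_ineq[of "op_pow C k - op_pow C m" "op_pow C m - op_pow C (Suc m)"] by simp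
  also have "\<dots> \<le> K * (real m - real k) / (real k + 1) + K / (real m + 1)"
    using step.IH h eq by (intro add_mono) auto
  also have "K / (real m + 1) \<le> K / (real k + 1)"
    using K step.hyps by (intro divide_left_mono) auto
  note kk = this
  have "K * (real m - real k) / (real k + 1) + K / (real m + 1) \<le> K * (real (Suc m) - real k) / (real k + 1)"
  proof -
    have "K * (real (Suc m) - real k) / (real k + 1) = K * (real m - real k) / (real k + 1) + K / (real k + 1)"
    proof -
      have "K * (real (Suc m) - real k) = K * (real m - real k) + K" by (simp add: algebra_simps)
      thus ?thesis by (simp only: add_divide_distrib)
    qed
    thus ?thesis using kk by linarith
  qed
  finally show ?case .
qed

lemma cubic_pos: "(x::real) \<ge> 1 \<Longrightarrow> x^2 * (x + 2) \<le> 2 * x^3 + 2"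
proof -
  assume "x \<ge> 1"
  have "0 \<le> (x - 4/3)^2 * (x + 2/3)" using \<open>x \<ge> 1\<close> by simp
  moreover have "(x - 4/3)^2 * (x + 2/3) = x^3 - 2*x^2 + 32/27"
    by (simp add: power2_eq_square power3_eq_cube field_simps)
  moreover have "x^2*(x+2) = x^3 + 2*x^2" by (simp add: power2_eq_square power3_eq_cube algebra_simps)
  ultimately show ?thesis by linarith
qed

lemma point_bound:
  fixes C :: "'a::real_normed_vector \<Rightarrow>\<^sub>L 'a"
  assumes h: "\<forall>n::nat. norm (op_pow C n o\<^sub>L (id_blinfun - C)) \<le> K / (real n + 1)"
    and K: "K > 0" and C1: "norm C \<le> 1" and x1: "x \<ge> 1" and xn: "x ^ 3 = real n"
  shows "norm (op_pow C n - op_pow C k) \<le> 2 * K / x + 2 * (real k - real n)^2 / x^4"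
proof (cases "\<bar>real k - real n\<bar> \<le> x^2")
  case False
  have x4: "x^4 > 0" using x1 by simp
  have "x^4 = (x^2)^2" by simp
  also have "\<dots> < (real k - real n)^2"
    using False x1 by (metis abs_ge_zero abs_le_square_iff not_le power2_less_eq_zero_iff power_mono_iff zero_less_power zero_less_two abs_power2 less_le_trans zero_less_one power_less_imp_less_base abs_less_iff) 
  finally have "1 \<le> (real k - real n)^2 / x^4" using x4 by simp
  moreover have "norm (op_pow C n - op_pow C k) \<le> 2"
    using pow_le1[OF C1, of n] pow_le1[OF C1, of k] norm_triangle_ineq4[of "op_pow C n" "op_pow C k"] by linarith
  moreover have "0 \<le> 2 * K / x" using K x1 by simp
  ultimately show ?thesis by linarith
next
  case True
  have x0: "x > 0" using x1 by simp
  have "norm (op_pow C n - op_pow C k) \<le> 2 * K / x"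
  proof (cases "n \<le> k")
    case nk: True
    have "norm (op_pow C n - op_pow C k) \<le> K * (real k - real n) / (real n + 1)"
      by (rule pow_diff_bound[OF h K nk])
    also have "\<dots> \<le> 2 * K / x"
    proof -
      have d: "real k - real n \<le> x^2" using True nk by simp
      have "(real k - real n) * x \<le> x^2 * x" using d x0 by (simp add: mult_right_mono)
      also have "\<dots> \<le> 2 * (real n + 1)" using xn x0 by (simp add: power3_eq_cube power2_eq_square)
      finally have "(real k - real n) * x \<le> 2 * (real n + 1)" .
      thus ?thesis using x0 K by (simp add: divide_simps)
    qed
    finally show ?thesis .
  next
    case nk: False
    have "norm (op_pow C n - op_pow C k) = norm (op_pow C k - op_pow C n)" by (rule norm_minus_commute)
    also have "\<dots> \<le> K * (real n - real k) / (real k + 1)"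
      by (rule pow_diff_bound[OF h K]) (use nk in simp)
    also have "\<dots> \<le> 2 * K / x"
    proof -
      define d where "d = real n - real k"
      have d: "d \<le> x^2" "d \<ge> 0" using True nk by (auto simp: d_def)
      have "d * (x + 2) \<le> x^2 * (x + 2)" using d x0 by (simp add: mult_right_mono)
      also have "\<dots> \<le> 2 * x^3 + 2" by (rule cubic_pos[OF x1])
      finally have "d * x \<le> 2 * (real k + 1)" using xn by (simp add: d_def algebra_simps)
      thus ?thesis using x0 K by (simp add: divide_simps d_def)
    qed
    finally show ?thesis .
  qed
  moreover have "0 \<le> 2 * (real k - real n)^2 / x^4" using x0 by simp
  ultimately show ?thesis by linarith
qed



theorem theorem3p3:
  fixes C :: "'a::complex_hilbert \<Rightarrow>\<^sub>L 'a" and \<alpha> K :: real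
  assumes "0 \<le> \<alpha>" and "\<alpha> < pi / 2"
    and "quasi_sectorial_contraction \<alpha> C"
    and "K > 0"
    and "\<forall>n::nat. norm (op_pow C n o\<^sub>L (id_blinfun - C)) \<le> K / (real n + 1)"
  shows "\<forall>n::nat. n \<ge> 1 \<longrightarrow>
           norm (op_pow C n - op_exp (real n *\<^sub>R (C - id_blinfun)))
             \<le> (2 * K + 2) / real n powr (1 / 3)"
proof (intro allI impI)
  fix n :: nat assume n1: "n \<ge> 1"
  have C1: "norm C \<le> 1" using assms(3) by (simp add: quasi_sectorial_contraction_def)
  have K: "K > 0" by fact
  define N where "N = real n"
  define x where "x = N powr (1/3)"
  have N1: "N \<ge> 1" using n1 by (simp add: N_def)
  have x1: "x \<ge> 1" unfolding x_def using N1 by (simp add: ge_one_powr_ge_zero)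
  have x0: "x > 0" using x1 by simp
  have x3: "x ^ 3 = N"
  proof -
    have "x ^ 3 = x powr (real 3)" using x0 by (simp add: powr_realpow)
    also have "\<dots> = N" unfolding x_def using N1 by (simp add: powr_powr)
    finally show ?thesis .
  qed
  define p where "p = (\<lambda>k. exp (-N) * (N ^ k / fact k))"
  have p0: "p k \<ge> 0" for k unfolding p_def using N1 by simp
  have ps: "p sums 1" and pv: "(\<lambda>k. p k * (real k - N)^2) sums N"
    unfolding p_def by (rule poisson_var)+
  define E where "E = op_exp (N *\<^sub>R (C - id_blinfun))"
  have s1: "(\<lambda>k. p k *\<^sub>R op_pow C n) sums (1 *\<^sub>R op_pow C n)"
    by (rule sums_scaleR_left[OF ps])
  have s2: "(\<lambda>k. p k *\<^sub>R op_pow C k) sums E"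
    unfolding p_def E_def by (rule op_exp_poisson)
  have sd: "(\<lambda>k. p k *\<^sub>R (op_pow C n - op_pow C k)) sums (op_pow C n - E)"
    using sums_diff[OF s1 s2] by (simp add: scaleR_diff_right)
  define g where "g = (\<lambda>k. (2 * K / x) * p k + (2 / x^4) * (p k * (real k - N)^2))"
  have gs: "g sums ((2 * K / x) * 1 + (2 / x^4) * N)"
    unfolding g_def by (intro sums_add sums_mult ps pv)
  have gle: "norm (p k *\<^sub>R (op_pow C n - op_pow C k)) \<le> g k" for k
  proof -
    have "norm (op_pow C n - op_pow C k) \<le> 2 * K / x + 2 * (real k - real n)^2 / x^4"
      by (rule point_bound[OF assms(5) K C1 x1]) (simp add: x3 N_def)
    hence "p k * norm (op_pow C n - op_pow C k) \<le> p k * (2 * K / x + 2 * (real k - real n)^2 / x^4)"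
      by (rule mult_left_mono) (rule p0)
    thus ?thesis by (simp only: norm_scaleR abs_of_nonneg[OF p0]) (simp add: g_def N_def algebra_simps)
  qed
  have "norm (op_pow C n - E) \<le> (2 * K / x) * 1 + (2 / x^4) * N"
    using norm_suminf_le[OF gle sums_summable[OF gs]] sums_unique[OF sd] sums_unique[OF gs] by simp
  also have "(2 / x^4) * N = 2 / x"
    using x0 by (simp add: x3[symmetric] power3_eq_cube power4_eq_xxxx)
  also have "(2 * K / x) * 1 + 2 / x = (2 * K + 2) / x" by (simp add: add_divide_distrib)
  finally show "norm (op_pow C n - op_exp (real n *\<^sub>R (C - id_blinfun))) \<le> (2 * K + 2) / real n powr (1 / 3)"
    by (simp add: E_def x_def N_def)
qed

end
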